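(* Fix $n\in\mathbb{N}$. If $0<U\le \frac{T}{\ln^2T}$ and $T$ is sufficiently large, then $$0<\varphi_1^k(T+U)-\varphi_1^k(T)<\frac{2k+1}{2n+1}\,\frac{T}{\ln T}\le\frac{T}{\ln T},\qquad k=1,\dots,n.$$
   Context: A Jacob's ladder is a function $\varphi_1(t)=\frac12\varphi(t)$, where $y=\varphi(T)$ is an arbitrary solution of the nonlinear integral equation $\int_0^{\mu[x(T)]}Z^2(t)e^{-\frac{2}{x(T)}t}\,{\rm d}t=\int_0^T Z^2(t)\,{\rm d}t$, with $Z(t)=e^{i\vartheta(t)}\zeta(\frac12+it)$, $\vartheta(t)=-\frac t2\ln\pi+\operatorname{Im}\ln\Gamma(\frac14+i\frac t2)$, $\mu(y)\ge 7y\ln y$. It is known that $\varphi_1$ is increasing for $t\ge T_0[\varphi_1]$ and satisfies $t-\varphi_1(t)\sim(1-c)\frac{t}{\ln t}$ as $t\to\infty$, where $c$ is Euler's constant. Iterates: $\varphi_1^0(t)=t$, $\varphi_1^{k+1}(t)=\varphi_1(\varphi_1^k(t))$. *)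

theory Defs
  imports "HOL-Analysis.Analysis" "HOL-Library.Landau_Symbols"
begin

text \<open>Riemann zeta function on the half-plane Re s > 0 (in particular on the critical
line), via the Dirichlet eta function:
  zeta s = (1 - 2^(1-s))^(-1) * sum_{n>=1} (-1)^(n-1) n^(-s).\<close>
definition zeta_crit :: "complex \<Rightarrow> complex" where
  "zeta_crit s = (\<Sum>n. (-1) ^ n * (of_nat (Suc n)) powr (- s)) / (1 - 2 powr (1 - s))"

definition rs_theta :: "real \<Rightarrow> real" where
  "rs_theta t = - (t / 2) * ln pi + Im (ln_Gamma (Complex (1/4) (t/2)))"

text \<open>Hardy's function Z(t) = e^{i theta(t)} zeta(1/2 + i t) (a real number).\<close>
definition hardy_Z :: "real \<Rightarrow> real" where
  "hardy_Z t = Re (exp (\<i> * of_real (rs_theta t)) * zeta_crit (Complex (1/2) t))"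

definition jacobs_ladder :: "(real \<Rightarrow> real) \<Rightarrow> bool" where
  "jacobs_ladder \<phi>\<^sub>1 \<longleftrightarrow>
     (\<exists>\<phi> \<mu> T\<^sub>0.
        \<phi>\<^sub>1 = (\<lambda>t. \<phi> t / 2) \<and>
        (\<forall>y>0. \<mu> y \<ge> 7 * y * ln y) \<and>
        (\<forall>T\<ge>T\<^sub>0. \<phi> T > 0 \<and>
           integral {0..\<mu> (\<phi> T)} (\<lambda>t. (hardy_Z t)\<^sup>2 * exp (- (2 / \<phi> T) * t))
             = integral {0..T} (\<lambda>t. (hardy_Z t)\<^sup>2)))"

end

theory Submission
  imports Defs
begin

lemma xlnx_mono:
  fixes a b :: real assumes "exp 1 \<le> a" "a \<le> b" shows "a / ln a \<le> b / ln b"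
proof (rule DERIV_nonneg_imp_nondecreasing[OF assms(2)])
  fix x assume x: "a \<le> x" "x \<le> b"
  have x1: "exp 1 \<le> x" using x assms by linarith
  have xp: "x > 0" using x1 exp_gt_zero[of 1] by linarith
  have l1: "ln x \<ge> 1" using x1 xp by (metis ln_exp ln_le_cancel_iff exp_gt_zero)
  have "((\<lambda>x. x / ln x) has_real_derivative (ln x - 1) / (ln x)^2) (at x)"
    using xp l1 by (auto intro!: derivative_eq_intros simp: field_simps power2_eq_square)
  then show "\<exists>y. ((\<lambda>x. x / ln x) has_real_derivative y) (at x) \<and> 0 \<le> y"
    using l1 by (intro exI[of _ "(ln x - 1) / (ln x)^2"]) auto
qed

theorem mainTheorem4:
  fixes \<phi>\<^sub>1 :: "real \<Rightarrow> real" and n :: nat and T\<^sub>0 :: real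
  assumes ladder: "jacobs_ladder \<phi>\<^sub>1"
    and incr: "strict_mono_on {T\<^sub>0..} \<phi>\<^sub>1"
    and asymp: "(\<lambda>t. t - \<phi>\<^sub>1 t) \<sim>[at_top] (\<lambda>t. (1 - euler_mascheroni) * t / ln t)"
  shows "\<forall>\<^sub>F T in at_top. \<forall>U. 0 < U \<and> U \<le> T / (ln T)\<^sup>2 \<longrightarrow>
           (\<forall>k\<in>{1..n}.
              0 < (\<phi>\<^sub>1 ^^ k) (T + U) - (\<phi>\<^sub>1 ^^ k) T \<and>
              (\<phi>\<^sub>1 ^^ k) (T + U) - (\<phi>\<^sub>1 ^^ k) T
                < (2 * real k + 1) / (2 * real n + 1) * (T / ln T) \<and>
              (2 * real k + 1) / (2 * real n + 1) * (T / ln T) \<le> T / ln T)"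
proof -
  define c' :: real where "c' = 1 - euler_mascheroni"
  have c'pos: "c' > 0" unfolding c'_def using euler_mascheroni_less_13_over_22 by simp
  have c'le: "c' \<le> 1" unfolding c'_def using euler_mascheroni_pos by simp
  define \<epsilon> :: real where "\<epsilon> = 1 / (10 * (real n + 1) * (2 * real n + 1))"
  have \<epsilon>pos: "\<epsilon> > 0" unfolding \<epsilon>_def by simp
  have \<epsilon>le: "\<epsilon> \<le> 1/10"
  proof -
    have "10 \<le> 10 * (real n + 1) * (2 * real n + 1)" by (simp add: algebra_simps)
    thus ?thesis unfolding \<epsilon>_def by (simp add: divide_le_eq)
  qed
  define g where "g t = t - \<phi>\<^sub>1 t" for t
  define h where "h t = c' * t / ln t" for t :: real
  have lim: "((\<lambda>t. if g t = 0 \<and> h t = 0 then 1 else g t / h t) \<longlongrightarrow> 1) at_top"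
    using asymp_equivD[OF asymp] unfolding g_def h_def c'_def by simp
  have ev1: "\<forall>\<^sub>F t in at_top. dist (if g t = 0 \<and> h t = 0 then 1 else g t / h t) 1 < \<epsilon>"
    using tendstoD[OF lim \<epsilon>pos] .
  have "\<forall>\<^sub>F t in at_top. \<bar>g t - h t\<bar> \<le> \<epsilon> * h t"
    using ev1 eventually_gt_at_top[of 1]
  proof eventually_elim
    case (elim t)
    have hp: "h t > 0" unfolding h_def using elim(2) c'pos by simp
    hence "\<bar>g t / h t - 1\<bar> < \<epsilon>" using elim(1) by (simp add: dist_real_def)
    hence "\<bar>(g t - h t) / h t\<bar> < \<epsilon>" using hp by (simp add: field_simps)
    hence "\<bar>g t - h t\<bar> / h t < \<epsilon>" using hp by simp
    thus ?case using hp by (simp add: field_simps)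
  qed
  then obtain M0 where M0: "\<And>t. t \<ge> M0 \<Longrightarrow> \<bar>g t - h t\<bar> \<le> \<epsilon> * h t"
    by (auto simp: eventually_at_top_linorder)
  define M where "M = max (max M0 T\<^sub>0) (exp 4)"
  have e4: "exp (1::real) \<le> exp 4" by simp
  have e4': "exp (4::real) > 1" by simp
  have Mge: "M \<ge> M0" "M \<ge> T\<^sub>0" "M \<ge> exp 4" unfolding M_def by auto
  have Mpos: "M > 1" using Mge(3) e4' by linarith
  have lnM: "ln t \<ge> 4" if "t \<ge> M" for t
  proof -
    have "exp 4 \<le> t" using that Mge by linarith
    moreover have "0 < exp (4::real)" by simp
    ultimately have "ln (exp 4) \<le> ln t" by (metis ln_le_cancel_iff less_le_trans)
    thus ?thesis by simp
  qed
  have hpos: "h t > 0" if "t \<ge> M" for t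
    unfolding h_def using lnM[OF that] that Mpos c'pos by simp
  have P1: "\<phi>\<^sub>1 t < t" if "t \<ge> M" for t
  proof -
    have "\<bar>g t - h t\<bar> \<le> \<epsilon> * h t" using M0 that Mge by auto
    hence "g t \<ge> (1 - \<epsilon>) * h t" by (simp add: algebra_simps)
    moreover have "(1 - \<epsilon>) * h t > 0" using hpos[OF that] \<epsilon>le by simp
    ultimately show ?thesis unfolding g_def by linarith
  qed
  have P2: "t / 2 \<le> \<phi>\<^sub>1 t" if "t \<ge> M" for t
  proof -
    have "\<bar>g t - h t\<bar> \<le> \<epsilon> * h t" using M0 that Mge by auto
    hence "g t \<le> (1 + \<epsilon>) * h t" by (simp add: algebra_simps)
    moreover have "(1 + \<epsilon>) * h t \<le> 2 * (t / ln t)"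
    proof -
      have "h t \<le> t / ln t" unfolding h_def using c'le lnM[OF that] that Mpos
        by (simp add: divide_right_mono mult_left_le_one_le)
      moreover have "(1 + \<epsilon>) * h t \<le> 2 * h t"
        using \<epsilon>le hpos[OF that] by (intro mult_right_mono) auto
      ultimately show ?thesis by linarith
    qed
    moreover have "2 * (t / ln t) \<le> t / 2"
      using lnM[OF that] that Mpos by (simp add: field_simps)
    ultimately show ?thesis unfolding g_def by linarith
  qed
  have evT: "\<forall>\<^sub>F T in at_top. T \<ge> 2^n * M \<and> T \<ge> 4^n \<and> ln T \<ge> 1 / \<epsilon>"
    using eventually_ge_at_top[of "2^n * M"] eventually_ge_at_top[of "4^n"]
      filterlim_at_top[THEN iffD1, OF ln_at_top, rule_format, of "1/\<epsilon>"]
    by eventually_elim auto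
  show ?thesis
    using evT
  proof (rule eventually_mono, intro allI impI)
    fix T U :: real
    assume T: "T \<ge> 2^n * M \<and> T \<ge> 4^n \<and> ln T \<ge> 1 / \<epsilon>"
    assume U: "0 < U \<and> U \<le> T / (ln T)\<^sup>2"
    have ten: "1 / \<epsilon> \<ge> 10" using \<epsilon>pos \<epsilon>le by (simp add: field_simps)
    have lnT: "ln T \<ge> 1" using T ten by linarith
    have Tpos: "T > 0" using T Mpos by (smt (verit) one_le_power mult_le_cancel_right1 zero_less_power)
    have TM: "T / 2^k \<ge> M" if "k \<le> n" for k :: nat
    proof -
      have "(2::real)^k \<le> 2^n" using that by (simp add: power_increasing)
      hence "2^k * M \<le> T" using T Mpos by (smt (verit) mult_right_mono)
      thus ?thesis by (simp add: field_simps)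
    qed
    have T1: "T > 1" using ln_gt_zero_iff[of T] lnT Tpos by linarith
    have Tl: "T / ln T > 0" using Tpos lnT by (metis divide_pos_pos less_le_trans zero_less_one)
    have U1: "U \<le> \<epsilon> * (T / ln T)"
    proof -
      have "T / (ln T)\<^sup>2 = (T / ln T) * (1 / ln T)" by (simp add: power2_eq_square)
      also have "\<dots> \<le> (T / ln T) * \<epsilon>"
      proof (rule mult_left_mono)
        show "1 / ln T \<le> \<epsilon>" using T \<epsilon>pos lnT by (simp add: divide_le_eq mult.commute)
      qed (use Tl in auto)
      finally show ?thesis using U by (simp add: mult.commute)
    qed
    have UT: "U \<le> T"
    proof -
      have "T / ln T \<le> T / 1"
        using divide_left_mono[of 1 "ln T" T] lnT Tpos by linarith
      moreover have "\<epsilon> * (T / ln T) \<le> T / ln T"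
        using \<epsilon>le \<epsilon>pos Tl by (intro mult_left_le_one_le) auto
      ultimately show ?thesis using U1 by linarith
    qed
    have lnb: "ln x \<ge> ln T / 2" if "x \<ge> T / 2^n" for x
    proof -
      have xp: "x > 0" using that Tpos by (smt (verit) divide_pos_pos zero_less_power)
      have "ln (T / 2^n) \<le> ln x" using that Tpos xp by simp
      moreover have "ln (T / 2^n) = ln T - n * ln 2" using Tpos by (simp add: ln_div ln_realpow)
      moreover have "ln T \<ge> n * ln 4"
      proof -
        have "ln ((4::real)^n) \<le> ln T" using T Tpos by simp
        thus ?thesis by (simp add: ln_realpow)
      qed
      moreover have "ln (4::real) = 2 * ln 2"
        using ln_realpow[of 2 2] by simp
      ultimately show ?thesis by simp
    qed
    define a where "a k = (\<phi>\<^sub>1 ^^ k) T" for k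
    define b where "b k = (\<phi>\<^sub>1 ^^ k) (T + U)" for k
    have key: "k \<le> n \<Longrightarrow> T / 2^k \<le> a k \<and> a k < b k \<and> b k \<le> T + U \<and>
                 b k - a k \<le> (1 + 8 * real k) * \<epsilon> * (T / ln T)" for k
    proof (induction k)
      case 0
      then show ?case using U U1 by (simp add: a_def b_def)
    next
      case (Suc k)
      hence IH: "T / 2^k \<le> a k \<and> a k < b k \<and> b k \<le> T + U \<and>
                 b k - a k \<le> (1 + 8 * real k) * \<epsilon> * (T / ln T)" by simp
      have aM: "a k \<ge> M" using IH TM[of k] Suc.prems by simp
      have bM: "b k \<ge> M" using IH aM by simp
      have ak2: "T / 2^n \<le> a k"
      proof -
        have "(2::real)^k \<le> 2^n" using Suc.prems by (simp add: power_increasing)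
        hence "T / 2^n \<le> T / 2^k" using Tpos by (simp add: frac_le)
        thus ?thesis using IH by simp
      qed
      have as: "a (Suc k) = \<phi>\<^sub>1 (a k)" "b (Suc k) = \<phi>\<^sub>1 (b k)" by (simp_all add: a_def b_def)
      have s1: "T / 2 ^ Suc k \<le> a (Suc k)"
      proof -
        have "T / 2 ^ Suc k = (T / 2^k) / 2" by simp
        also have "\<dots> \<le> a k / 2" using IH by simp
        also have "\<dots> \<le> a (Suc k)" using P2[OF aM] as by simp
        finally show ?thesis .
      qed
      have s2: "a (Suc k) < b (Suc k)" using incr IH aM bM Mge as
        by (simp add: strict_mono_on_def)
      have s3: "b (Suc k) \<le> T + U" using P1[OF bM] IH as by simp
      have ha: "h (a k) \<le> h (b k)"
      proof -
        have "a k / ln (a k) \<le> b k / ln (b k)"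
          using xlnx_mono[of "a k" "b k"] aM Mge e4 IH by simp
        thus ?thesis unfolding h_def using c'pos
          by (metis mult_left_mono less_imp_le times_divide_eq_right)
      qed
      have hb: "h (b k) \<le> 4 * (T / ln T)"
      proof -
        have lb: "ln (b k) \<ge> ln T / 2" using lnb[of "b k"] ak2 IH by simp
        have "h (b k) \<le> b k / ln (b k)" unfolding h_def using c'le lnM[OF bM] bM Mpos
          by (simp add: divide_right_mono mult_left_le_one_le)
        also have "\<dots> \<le> (2 * T) / (ln T / 2)"
          using IH UT lb lnT bM Mpos T1 by (intro frac_le) auto
        also have "\<dots> = 4 * (T / ln T)" by simp
        finally show ?thesis .
      qed
      have ga: "\<bar>g (a k) - h (a k)\<bar> \<le> \<epsilon> * h (a k)" using M0 aM Mge by auto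
      have gb: "\<bar>g (b k) - h (b k)\<bar> \<le> \<epsilon> * h (b k)" using M0 bM Mge by auto
      have "b (Suc k) - a (Suc k) = (b k - a k) + g (a k) - g (b k)"
        using as unfolding g_def by simp
      also have "\<dots> \<le> (b k - a k) + \<epsilon> * (h (a k) + h (b k))"
        using ga gb ha by (simp add: abs_le_iff algebra_simps)
      also have "\<dots> \<le> (b k - a k) + \<epsilon> * (8 * (T / ln T))"
        using ha hb \<epsilon>pos by (intro add_left_mono mult_left_mono) auto
      also have "\<dots> \<le> (1 + 8 * real (Suc k)) * \<epsilon> * (T / ln T)"
      proof -
        have eq: "\<And>X. (1 + 8 * real (Suc k)) * \<epsilon> * X = (1 + 8 * real k) * \<epsilon> * X + \<epsilon> * (8 * X)"
          by (simp add: algebra_simps)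
        show ?thesis using eq[of "T / ln T"] IH by linarith
      qed
      finally show ?case using s1 s2 s3 by simp
    qed
    show "\<forall>k\<in>{1..n}.
              0 < (\<phi>\<^sub>1 ^^ k) (T + U) - (\<phi>\<^sub>1 ^^ k) T \<and>
              (\<phi>\<^sub>1 ^^ k) (T + U) - (\<phi>\<^sub>1 ^^ k) T
                < (2 * real k + 1) / (2 * real n + 1) * (T / ln T) \<and>
              (2 * real k + 1) / (2 * real n + 1) * (T / ln T) \<le> T / ln T"
    proof
      fix k assume k: "k \<in> {1..n}"
      hence kn: "k \<le> n" by simp
      note K = key[OF kn]
      have c1: "(1 + 8 * real k) * \<epsilon> < 1 / (2 * real n + 1)"
      proof -
        have "(1 + 8 * real k) * \<epsilon> \<le> (1 + 8 * real n) * \<epsilon>"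
          using kn \<epsilon>pos by (intro mult_right_mono) auto
        also have "\<dots> = (1 + 8 * real n) / (10 * (real n + 1)) * (1 / (2 * real n + 1))"
          unfolding \<epsilon>_def by simp
        also have "\<dots> < 1 * (1 / (2 * real n + 1))"
          by (intro mult_strict_right_mono) (auto simp: field_simps)
        finally show ?thesis by simp
      qed
      have c2: "1 / (2 * real n + 1) \<le> (2 * real k + 1) / (2 * real n + 1)"
        by (intro divide_right_mono) auto
      have c3: "(2 * real k + 1) / (2 * real n + 1) \<le> 1" using kn by simp
      have "b k - a k < (2 * real k + 1) / (2 * real n + 1) * (T / ln T)"
      proof -
        have "b k - a k \<le> (1 + 8 * real k) * \<epsilon> * (T / ln T)" using K by simp
        also have "\<dots> < (1 / (2 * real n + 1)) * (T / ln T)"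
          using c1 Tl by (intro mult_strict_right_mono) auto
        also have "\<dots> \<le> (2 * real k + 1) / (2 * real n + 1) * (T / ln T)"
          using c2 Tl by (intro mult_right_mono) auto
        finally show ?thesis .
      qed
      moreover have "(2 * real k + 1) / (2 * real n + 1) * (T / ln T) \<le> T / ln T"
        using c3 Tl mult_right_mono[OF c3, of "T / ln T"] by simp
      ultimately show "0 < (\<phi>\<^sub>1 ^^ k) (T + U) - (\<phi>\<^sub>1 ^^ k) T \<and>
              (\<phi>\<^sub>1 ^^ k) (T + U) - (\<phi>\<^sub>1 ^^ k) T
                < (2 * real k + 1) / (2 * real n + 1) * (T / ln T) \<and>
              (2 * real k + 1) / (2 * real n + 1) * (T / ln T) \<le> T / ln T"
        using K unfolding a_def b_def by simp
    qed
  qed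
qed

end
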